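(* For every pair $(a,b)\in\{(\pm\tfrac12,\pm\tfrac12)\}$ and every $n\geq1$, $$\sup_{\theta\in[0,\pi]^n}\rho_n^{a,b}(\theta)\leq\frac{(2e/\pi)^n}{\sqrt{2\pi n}}.$$
   Context: $\rho_n^{a,b}$ is the probability density on $[0,\pi]^n$ given by $\rho_n^{--}(\theta)=\frac{2^{(n-1)^2}}{n!\pi^n}\prod_{j<k}(\cos\theta_j-\cos\theta_k)^2$, $\rho_n^{++}(\theta)=\frac{2^{n^2}}{n!\pi^n}\prod_{j}\sin^2\theta_j\prod_{j<k}(\cos\theta_j-\cos\theta_k)^2$, $\rho_n^{-+}(\theta)=\frac{2^{n^2}}{n!\pi^n}\prod_{j}\cos^2\frac{\theta_j}{2}\prod_{j<k}(\cos\theta_j-\cos\theta_k)^2$, $\rho_n^{+-}(\theta)=\frac{2^{n^2}}{n!\pi^n}\prod_{j}\sin^2\frac{\theta_j}{2}\prod_{j<k}(\cos\theta_j-\cos\theta_k)^2$, where signs abbreviate $a,b=\pm\frac12$. *)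

theory Defs
  imports "HOL-Analysis.Analysis"
begin

definition vdm_sq :: "nat \<Rightarrow> (nat \<Rightarrow> real) \<Rightarrow> real" where
  "vdm_sq n th = (\<Prod>k<n. \<Prod>j<k. (cos (th j) - cos (th k))^2)"

definition rho :: "nat \<Rightarrow> real \<Rightarrow> real \<Rightarrow> (nat \<Rightarrow> real) \<Rightarrow> real" where
  "rho n a b th =
    (if a = -1/2 \<and> b = -1/2 then
       2 ^ ((n - 1)^2) / (fact n * pi ^ n) * vdm_sq n th
     else if a = 1/2 \<and> b = 1/2 then
       2 ^ (n^2) / (fact n * pi ^ n) * (\<Prod>j<n. (sin (th j))^2) * vdm_sq n th
     else if a = -1/2 \<and> b = 1/2 then
       2 ^ (n^2) / (fact n * pi ^ n) * (\<Prod>j<n. (cos (th j / 2))^2) * vdm_sq n th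
     else
       2 ^ (n^2) / (fact n * pi ^ n) * (\<Prod>j<n. (sin (th j / 2))^2) * vdm_sq n th)"

end

theory Submission
  imports Defs "Jordan_Normal_Form.Determinant"
begin


lemma ln_lower_aux:
  fixes y :: real assumes "0 \<le> y"
  shows "2*y/(2+y) \<le> ln (1+y)"
proof -
  let ?f = "\<lambda>t::real. ln (1+t) - 2*t/(2+t)"
  have "?f 0 \<le> ?f y"
  proof (rule DERIV_nonneg_imp_nondecreasing[OF assms])
    fix x :: real assume x: "0 \<le> x" "x \<le> y"
    have "(?f has_real_derivative (1/(1+x) - (2*(2+x) - 2*x)/(2+x)^2)) (at x)"
      using x by (auto intro!: derivative_eq_intros simp: power2_eq_square)
    moreover have "0 \<le> 1/(1+x) - (2*(2+x) - 2*x)/(2+x)^2"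
    proof -
      have "(2*(2+x) - 2*x)/(2+x)^2 = 4/(2+x)^2" by simp
      also have "\<dots> \<le> 1/(1+x)"
        using x by (simp add: divide_simps power2_eq_square algebra_simps)
      finally show ?thesis by simp
    qed
    ultimately show "\<exists>d. (?f has_real_derivative d) (at x) \<and> 0 \<le> d" by blast
  qed
  then show ?thesis by simp
qed

definition st :: "nat \<Rightarrow> real" where
  "st n = (fact n)^2 * exp (2*real n) / (real n ^ (2*n) * real n)"

lemma st_pos: "n \<ge> 1 \<Longrightarrow> st n > 0"
  by (simp add: st_def)

lemma st_step:
  assumes "n \<ge> 1"
  shows "st (Suc n) * (1 + 1/real n) ^ (2*n+1) = st n * exp 2"
proof -
  have n: "real n > 0" using assms by simp
  have e: "exp (2 * real (Suc n)) = exp (2*real n) * exp 2"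
    by (simp add: exp_add[symmetric] algebra_simps)
  have p: "(1 + 1/real n) ^ (2*n+1) = (real n + 1) ^ (2*n+1) / real n ^ (2*n+1)"
    using n by (simp add: field_simps power_divide)
  have q: "real (Suc n) ^ (2 * Suc n) * real (Suc n) = (real n + 1)^2 * (real n + 1) ^ (2*n+1)"
    by (simp add: power_add[symmetric] algebra_simps)
  have r: "real n ^ (2*n) * real n = real n ^ (2*n+1)" by simp
  have g: "\<And>M F E e P Q::real. M > 0 \<Longrightarrow> P > 0 \<Longrightarrow> Q > 0 \<Longrightarrow>
     (M*F)^2*(E*e)/(M^2*P) * (P/Q) = F^2*E/Q*e"
    by (simp add: field_simps power2_eq_square)
  have "st (Suc n) = ((real n + 1) * fact n)^2 * (exp (2*real n) * exp 2) / ((real n+1)^2 * (real n + 1) ^ (2*n+1))"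
    unfolding st_def e q by (simp add: algebra_simps)
  moreover have "st n = (fact n)^2 * exp (2*real n) / real n ^ (2*n+1)"
    unfolding st_def r ..
  ultimately show ?thesis unfolding p using g[of "real n + 1" "real n ^ (2*n+1)" "(real n + 1) ^ (2*n+1)"] n
    by simp
qed

lemma st_decr:
  assumes "n \<ge> 1"
  shows "st (Suc n) \<le> st n"
proof -
  have n: "real n > 0" using assms by simp
  have "2*(1/real n)/(2+1/real n) \<le> ln (1 + 1/real n)"
    by (rule ln_lower_aux) simp
  moreover have "2*(1/real n)/(2+1/real n) = 2 / (2*real n+1)"
    using n by (simp add: field_simps)
  ultimately have "2 \<le> (2*real n+1) * ln (1 + 1/real n)"
    using n by (simp add: field_simps)
  hence "exp 2 \<le> exp ((2*real n+1) * ln (1 + 1/real n))" by simp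
  also have "\<dots> = (1 + 1/real n) ^ (2*n+1)"
  proof -
    have "exp ((2*real n+1) * ln (1 + 1/real n)) = exp (real (2*n+1) * ln (1 + 1/real n))" by simp
    also have "\<dots> = exp (ln (1 + 1/real n)) ^ (2*n+1)" by (rule exp_of_nat_mult)
    also have "\<dots> = (1 + 1/real n) ^ (2*n+1)" using n by (subst exp_ln) (auto intro: add_pos_pos)
    finally show ?thesis .
  qed
  finally have "exp 2 \<le> (1 + 1/real n) ^ (2*n+1)" .
  hence "st (Suc n) * exp 2 \<le> st (Suc n) * (1 + 1/real n) ^ (2*n+1)"
    using st_pos[of "Suc n"] by (intro mult_left_mono) auto
  also have "\<dots> = st n * exp 2" by (rule st_step[OF assms])
  finally show ?thesis by simp
qed

lemma st_lower_step:
  assumes "n \<ge> 1"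
  shows "st n * exp (-1/real n) \<le> st (Suc n)"
proof -
  have n: "real n > 0" using assms by simp
  have "ln (1 + 1/real n) \<le> 1/real n" by (rule ln_add_one_self_le_self) simp
  hence "(2*real n+1) * ln (1 + 1/real n) \<le> (2*real n+1) * (1/real n)"
    using n by (intro mult_left_mono) auto
  also have "\<dots> = 2 + 1/real n" using n by (simp add: field_simps)
  finally have "exp ((2*real n+1) * ln (1 + 1/real n)) \<le> exp (2 + 1/real n)" by simp
  also have "exp ((2*real n+1) * ln (1 + 1/real n)) = (1 + 1/real n) ^ (2*n+1)"
  proof -
    have "exp ((2*real n+1) * ln (1 + 1/real n)) = exp (real (2*n+1) * ln (1 + 1/real n))" by simp
    also have "\<dots> = exp (ln (1 + 1/real n)) ^ (2*n+1)" by (rule exp_of_nat_mult)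
    also have "\<dots> = (1 + 1/real n) ^ (2*n+1)" using n by (subst exp_ln) (auto intro: add_pos_pos)
    finally show ?thesis .
  qed
  finally have A: "(1 + 1/real n) ^ (2*n+1) \<le> exp 2 * exp (1/real n)" by (simp add: exp_add)
  have "st n * exp 2 = st (Suc n) * (1 + 1/real n) ^ (2*n+1)" by (rule st_step[OF assms, symmetric])
  also have "\<dots> \<le> st (Suc n) * (exp 2 * exp (1/real n))"
    using st_pos[of "Suc n"] A by (intro mult_left_mono) auto
  finally have "st n * exp 2 \<le> st (Suc n) * exp 2 * exp (1/real n)" by simp
  hence "st n \<le> st (Suc n) * exp (1/real n)" by simp
  hence "st n * exp (-1/real n) \<le> st (Suc n) * exp (1/real n) * exp (-1/real n)"
    by (intro mult_right_mono) auto
  also have "\<dots> = st (Suc n)" by (simp add: exp_minus[symmetric] mult.assoc exp_add[symmetric])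
  finally show ?thesis .
qed

lemma st_lower_k:
  assumes "n \<ge> 1"
  shows "st n * exp (-real k/real n) \<le> st (n + k)"
proof (induction k)
  case 0 then show ?case by simp
next
  case (Suc k)
  have n: "real n > 0" using assms by simp
  have "-real (Suc k)/real n = -real k/real n + -1/real n"
    by (cases "n=0") (auto simp: field_simps)
  hence "exp (-real (Suc k)/real n) = exp (-real k/real n) * exp (-1/real n)"
    by (simp only: exp_add)
  hence "st n * exp (-real (Suc k)/real n) = st n * exp (-real k/real n) * exp (-1/real n)"
    by simp
  also have "\<dots> \<le> st (n+k) * exp (-1/real n)"
    using Suc by (intro mult_right_mono) auto
  also have "\<dots> \<le> st (n+k) * exp (-1/real (n+k))"
    using n st_pos[of "n+k"] assms by (intro mult_left_mono) (auto simp: frac_le)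
  also have "\<dots> \<le> st (Suc (n+k))" by (rule st_lower_step) (use assms in simp)
  finally show ?case by simp
qed

lemma st_double: "n \<ge> 1 \<Longrightarrow> st n * exp (-1) \<le> st (2*n)"
  using st_lower_k[of n n] by (simp add: mult_2)

lemma wallis_prod:
  "(\<Prod>k=1..n. (4*real k^2) / (4*real k^2 - 1)) =
     (2^(2*n) * (fact n)^2)^2 / ((fact (2*n))^2 * (2*real n+1))"
proof (induction n)
  case 0 then show ?case by simp
next
  case (Suc n)
  have e: "fact (2 * Suc n) = (2*real n+2)*(2*real n+1) * (fact (2*n) :: real)"
    by (simp add: fact_Suc algebra_simps)
  have d: "4*real (Suc n)^2 - 1 = (2*real n+1)*(2*real n+3)" by (simp add: algebra_simps power2_eq_square)
  have pos: "fact (2*n) > (0::real)" by simp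
  have g0: "\<And>P F G A B C::real. G > 0 \<Longrightarrow> A > 0 \<Longrightarrow> B > 0 \<Longrightarrow> C > 0 \<Longrightarrow>
     (P*F^2)^2/(G^2*A) * (4*C^2/(A*B)) =
     ((4*P)*(C*F)^2)^2/(((2*C)*A*G)^2*B)"
    by (simp add: field_simps power2_eq_square)
  have g: "\<And>P F G N::real. G > 0 \<Longrightarrow> N \<ge> 0 \<Longrightarrow>
     (P*F^2)^2/(G^2*(2*N+1)) * (4*(N+1)^2/((2*N+1)*(2*N+3))) =
     ((4*P)*((N+1)*F)^2)^2/(((2*N+2)*(2*N+1)*G)^2*(2*N+3))"
  proof -
    fix P F G N :: real assume "G > 0" "N \<ge> 0"
    then show "(P*F^2)^2/(G^2*(2*N+1)) * (4*(N+1)^2/((2*N+1)*(2*N+3))) =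
     ((4*P)*((N+1)*F)^2)^2/(((2*N+2)*(2*N+1)*G)^2*(2*N+3))"
      using g0[of G "2*N+1" "2*N+3" "N+1" P F] by (simp add: algebra_simps)
  qed
  have p4: "(2::real)^(2*Suc n) = 4 * 2^(2*n)" by simp
  have "(\<Prod>k=1..Suc n. (4*real k^2) / (4*real k^2 - 1)) =
        (\<Prod>k=1..n. (4*real k^2) / (4*real k^2 - 1)) * (4*real (Suc n)^2 / (4*real (Suc n)^2 - 1))"
    by (simp add: prod.nat_ivl_Suc')
  also have "\<dots> = (2^(2*n) * (fact n)^2)^2 / ((fact (2*n))^2 * (2*real n+1)) *
      (4*(real n+1)^2/((2*real n+1)*(2*real n+3)))"
    unfolding Suc.IH d by simp
  also have "\<dots> = ((4*2^(2*n))*((real n+1)*fact n)^2)^2/(((2*real n+2)*(2*real n+1)*fact (2*n))^2*(2*real n+3))"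
    by (rule g) auto
  also have "\<dots> = (2^(2*Suc n) * (fact (Suc n))^2)^2 / ((fact (2*Suc n))^2 * (2*real (Suc n)+1))"
    unfolding p4 e by (simp add: algebra_simps)
  finally show ?case .
qed

lemma st_ratio:
  assumes "n \<ge> 1"
  shows "st n ^ 2 / st (2*n) =
     2 * (\<Prod>k=1..n. (4*real k^2) / (4*real k^2 - 1)) * ((2*real n+1) / real n)"
proof -
  have n: "real n > 0" using assms by simp
  have g0: "\<And>F G E N T A::real. F > 0 \<Longrightarrow> G > 0 \<Longrightarrow> E > 0 \<Longrightarrow> N > 0 \<Longrightarrow> T > 0 \<Longrightarrow> A > 0 \<Longrightarrow>
     (F^2*E/(T*N))^2 / (G^2 * E^2 / (T^2 * (2^(2*n))^2 * (2*N))) =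
     2 * ((2^(2*n)*F^2)^2/(G^2*A)) * (A/N)"
  proof -
    fix F G E N T A :: real assume a: "F > 0" "G > 0" "E > 0" "N > 0" "T > 0" "A > 0"
    define P :: real where "P = 2^(2*n)"
    have "(F^2*E/(T*N))^2 / (G^2 * E^2 / (T^2 * P^2 * (2*N))) = 2 * ((P*F^2)^2/(G^2*A)) * (A/N)"
      using a by (simp add: field_simps power2_eq_square)
    then show "(F^2*E/(T*N))^2 / (G^2 * E^2 / (T^2 * (2^(2*n))^2 * (2*N))) =
     2 * ((2^(2*n)*F^2)^2/(G^2*A)) * (A/N)" unfolding P_def .
  qed
  have g: "\<And>F G E N T::real. F > 0 \<Longrightarrow> G > 0 \<Longrightarrow> E > 0 \<Longrightarrow> N > 0 \<Longrightarrow> T > 0 \<Longrightarrow>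
     (F^2*E/(T*N))^2 / (G^2 * E^2 / (T^2 * (2^(2*n))^2 * (2*N))) =
     2 * ((2^(2*n)*F^2)^2/(G^2*(2*N+1))) * ((2*N+1)/N)"
    by (rule g0) auto
  have e2: "exp (2 * real (2*n)) = (exp (2*real n))^2"
    by (simp add: power2_eq_square exp_add[symmetric])
  have p: "real (2*n) ^ (2*(2*n)) * real (2*n) = (real n ^ (2*n))^2 * (2^(2*n))^2 * (2*real n)"
  proof -
    have "real (2*n) ^ (2*(2*n)) = (2*real n)^(2*(2*n))" by simp
    also have "\<dots> = 2^(2*(2*n)) * real n^(2*(2*n))" by (rule power_mult_distrib)
    also have "\<dots> = (2^(2*n))^2 * (real n^(2*n))^2" unfolding power_mult[symmetric] by (simp add: mult.commute)
    finally show ?thesis by simp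
  qed
  show ?thesis
    unfolding wallis_prod st_def e2 p
    by (rule g) (use assms n in auto)
qed

lemma st_ratio_lim: "(\<lambda>m. st (Suc m) ^ 2 / st (2*Suc m)) \<longlonglongrightarrow> 2*pi"
proof -
  have w: "(\<lambda>m. \<Prod>k=1..Suc m. (4*real k^2) / (4*real k^2 - 1)) \<longlonglongrightarrow> pi/2"
    using wallis by (rule LIMSEQ_Suc)
  have "(\<lambda>m. 2 + 1/real (Suc m)) \<longlonglongrightarrow> 2 + 0"
    by (intro tendsto_intros LIMSEQ_Suc[OF lim_inverse_n'])
  moreover have "(\<lambda>m. 2 + 1/real (Suc m)) = (\<lambda>m. (2*real (Suc m)+1) / real (Suc m))"
    by (auto simp: field_simps)
  ultimately have q: "(\<lambda>m. (2*real (Suc m)+1) / real (Suc m)) \<longlonglongrightarrow> 2" by simp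
  have "(\<lambda>m. 2 * (\<Prod>k=1..Suc m. (4*real k^2) / (4*real k^2 - 1)) * ((2*real (Suc m)+1) / real (Suc m)))
     \<longlonglongrightarrow> 2 * (pi/2) * 2" (is "?f \<longlonglongrightarrow> _")
    by (intro tendsto_intros w q)
  then have lim: "?f \<longlonglongrightarrow> 2*pi" by (rule tendsto_eq_rhs) simp
  have eq: "(\<lambda>m. st (Suc m) ^ 2 / st (2*Suc m)) = ?f"
    by (rule ext, rule st_ratio) simp
  show ?thesis unfolding eq by (rule lim)
qed

lemma st_ge: assumes "n \<ge> 1" shows "2*pi \<le> st n"
proof -
  define t where "t m = st (Suc m)" for m
  have dec: "decseq t" unfolding t_def
    by (rule decseq_SucI) (rule st_decr, simp)
  have lb: "\<forall>i. 0 \<le> t i" unfolding t_def using st_pos by (auto intro: less_imp_le)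
  obtain M where tM: "t \<longlonglongrightarrow> M" and Mle: "\<forall>i. M \<le> t i"
    using decseq_convergent[OF dec lb] by blast
  have c1: "st (Suc m) ^ 2 / st (2*Suc m) \<le> exp 1 * t m" for m
  proof -
    have p: "st (Suc m) > 0" by (rule st_pos) simp
    have p2: "st (2*Suc m) > 0" by (rule st_pos) simp
    have "st (Suc m) * exp (-1) \<le> st (2*Suc m)" by (rule st_double) simp
    hence "st (Suc m) ^ 2 / st (2*Suc m) \<le> st (Suc m) ^ 2 / (st (Suc m) * exp (-1))"
      using p p2 by (intro divide_left_mono) (auto intro: mult_pos_pos)
    also have "\<dots> = exp 1 * t m" using p unfolding t_def
      by (simp add: power2_eq_square exp_minus field_simps)
    finally show ?thesis .
  qed
  have "2*pi \<le> exp 1 * M"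
    by (rule LIMSEQ_le[OF st_ratio_lim tendsto_mult[OF tendsto_const tM]]) (use c1 in auto)
  hence Mpos: "M > 0"
  proof -
    assume h: "2*pi \<le> exp 1 * M"
    show "M > 0"
    proof (rule ccontr)
      assume "\<not> M > 0"
      hence "exp 1 * M \<le> 0" by (simp add: mult_nonneg_nonpos)
      with h pi_gt_zero show False by linarith
    qed
  qed
  have sub: "(\<lambda>m. t (2*m+1)) \<longlonglongrightarrow> M"
    by (rule LIMSEQ_subseq_LIMSEQ[OF tM, unfolded o_def]) (auto simp: strict_mono_def)
  have "(\<lambda>m. t m ^ 2 / t (2*m+1)) \<longlonglongrightarrow> M^2 / M"
    by (intro tendsto_intros tM sub) (use Mpos in simp)
  moreover have "(\<lambda>m. t m ^ 2 / t (2*m+1)) = (\<lambda>m. st (Suc m) ^ 2 / st (2*Suc m))"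
    unfolding t_def by simp
  ultimately have "(\<lambda>m. st (Suc m) ^ 2 / st (2*Suc m)) \<longlonglongrightarrow> M"
    using Mpos by (simp add: power2_eq_square)
  hence "M = 2*pi" using st_ratio_lim LIMSEQ_unique by blast
  moreover have "M \<le> st n" using Mle[rule_format, of "n - 1"] assms unfolding t_def by simp
  ultimately show ?thesis by simp
qed

lemma stirling_lower:
  assumes "n \<ge> 1"
  shows "sqrt (2*pi*real n) * real n ^ n \<le> fact n * exp 1 ^ n"
proof -
  have n: "real n > 0" using assms by simp
  have "2*pi \<le> (fact n)^2 * exp (2*real n) / (real n ^ (2*n) * real n)"
    using st_ge[OF assms] unfolding st_def .
  hence "2*pi * (real n ^ (2*n) * real n) \<le> (fact n)^2 * exp (2*real n)"
    using n by (simp add: pos_le_divide_eq)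
  moreover have "exp (2*real n) = (exp 1 ^ n)^2"
    by (simp add: exp_of_nat_mult[symmetric] power_mult[symmetric] mult.commute)
  ultimately have A: "2*pi*real n * (real n ^ n)^2 \<le> (fact n * exp 1 ^ n)^2"
    by (simp add: power_mult_distrib power_mult[symmetric] algebra_simps)
  have "sqrt (2*pi*real n) * real n ^ n = sqrt (2*pi*real n * (real n ^ n)^2)"
    using n by (simp add: real_sqrt_mult)
  also have "\<dots> \<le> sqrt ((fact n * exp 1 ^ n)^2)" using A by (rule real_sqrt_le_mono)
  also have "\<dots> = fact n * exp 1 ^ n" by simp
  finally show ?thesis .
qed



lemma det_rows_scale:
  fixes f :: "nat \<Rightarrow> nat \<Rightarrow> real"
  shows "det (mat n n (\<lambda>(j,k). c j * f j k)) = (\<Prod>j<n. c j) * det (mat n n (\<lambda>(j,k). f j k))"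
proof -
  have a: "(\<lambda>i. vec n (\<lambda>k. f i k)) \<in> {0..<n} \<rightarrow> carrier_vec n" by auto
  have "mat n n (\<lambda>(j,k). c j * f j k) = mat\<^sub>r n n (\<lambda>i. c i \<cdot>\<^sub>v vec n (\<lambda>k. f i k))"
    by (rule eq_matI) auto
  moreover have "mat n n (\<lambda>(j,k). f j k) = mat\<^sub>r n n (\<lambda>i. vec n (\<lambda>k. f i k))"
    by (rule eq_matI) auto
  ultimately show ?thesis using det_rows_mul[OF a, of c] by (simp add: atLeast0LessThan)
qed

definition vmat :: "nat \<Rightarrow> (nat \<Rightarrow> real) \<Rightarrow> real mat" where
  "vmat n x = mat n n (\<lambda>(j,i). x j ^ i)"

lemma prod_neg: "(\<Prod>j<n. - (f j :: real)) = (-1)^n * (\<Prod>j<n. f j)"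
  by (induction n) auto

lemma vander: "det (vmat n x) = (\<Prod>k<n. \<Prod>j<k. (x k - x j))"
proof (induction n)
  case 0 then show ?case by (simp add: vmat_def)
next
  case (Suc n)
  define N where "N = Suc n"
  define E :: "real mat" where "E = mat N N (\<lambda>(r,s). if r = s then 1 else if s = Suc r then - x n else 0)"
  define V where "V = vmat N x"
  have Ec: "E \<in> carrier_mat N N" by (simp add: E_def)
  have Vc: "V \<in> carrier_mat N N" by (simp add: V_def vmat_def)
  have detE: "det E = 1"
  proof -
    have "upper_triangular E" unfolding upper_triangular_def E_def by auto
    then have "det E = prod_list (diag_mat E)" using det_upper_triangular Ec by blast
    also have "\<dots> = 1" unfolding prod_list_diag_prod by (simp add: E_def)
    finally show ?thesis .
  qed
  define W where "W = V * E"
  have Wc: "W \<in> carrier_mat N N" using Vc Ec by (simp add: W_def)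
  have Went: "W $$ (j,s) = (if s = 0 then 1 else (x j - x n) * x j ^ (s - 1))" if "j < N" "s < N" for j s
  proof -
    have "W $$ (j,s) = (\<Sum>r<N. x j ^ r * (if r = s then 1 else if s = Suc r then - x n else 0))"
      using that unfolding W_def V_def vmat_def E_def
      by (simp add: scalar_prod_def atLeast0LessThan)
    also have "\<dots> = (\<Sum>r<N. (if r = s then x j ^ r else 0) + (if Suc r = s then - x n * x j ^ r else 0))"
      by (rule sum.cong) auto
    also have "\<dots> = x j ^ s + (\<Sum>r<N. if Suc r = s then - x n * x j ^ r else 0)"
      using that by (simp add: sum.distrib)
    also have "\<dots> = (if s = 0 then 1 else (x j - x n) * x j ^ (s - 1))"
    proof (cases s)
      case 0 then show ?thesis by simp
    next
      case (Suc t)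
      have "(\<Sum>r<N. if Suc r = s then - x n * x j ^ r else 0) = (\<Sum>r<N. if r = t then - x n * x j ^ r else 0)"
        using Suc by (intro sum.cong) auto
      also have "\<dots> = - x n * x j ^ t" using Suc that by simp
      finally show ?thesis using Suc by (simp add: algebra_simps)
    qed
    finally show ?thesis .
  qed
  have detVW: "det V = det W" unfolding W_def using det_mult[OF Vc Ec] detE by simp
  have "det W = (\<Sum>s<N. W $$ (n,s) * cofactor W n s)"
    by (rule laplace_expansion_row[OF Wc]) (simp add: N_def)
  also have "\<dots> = (\<Sum>s<N. if s = 0 then cofactor W n s else 0)"
    by (rule sum.cong) (auto simp: Went N_def)
  also have "\<dots> = cofactor W n 0" by (simp add: N_def)
  also have "\<dots> = (-1)^n * det (mat_delete W n 0)" by (simp add: cofactor_def)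
  also have "mat_delete W n 0 = mat n n (\<lambda>(j,s). (x j - x n) * x j ^ s)"
    by (rule eq_matI) (use Wc in \<open>auto simp: mat_delete_def Went N_def\<close>)
  also have "det \<dots> = (\<Prod>j<n. x j - x n) * det (vmat n x)"
    unfolding vmat_def by (rule det_rows_scale)
  finally have "det V = (-1)^n * (\<Prod>j<n. x j - x n) * det (vmat n x)" using detVW by simp
  also have "(-1)^n * (\<Prod>j<n. x j - x n) = (\<Prod>j<n. x n - x j)"
    using prod_neg[where n=n and f="\<lambda>j. x j - x n"] by simp
  finally show ?case using Suc.IH by (simp add: V_def N_def mult.commute)
qed

lemma det_poly_basis:
  fixes p :: "nat \<Rightarrow> real poly"
  assumes deg: "\<And>k. k < n \<Longrightarrow> degree (p k) \<le> k"
  shows "det (mat n n (\<lambda>(j,k). poly (p k) (x j))) = (\<Prod>k<n. coeff (p k) k) * det (vmat n x)"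
proof -
  define C where "C = mat n n (\<lambda>(i,k). coeff (p k) i)"
  have Cc: "C \<in> carrier_mat n n" by (simp add: C_def)
  have Vc: "vmat n x \<in> carrier_mat n n" by (simp add: vmat_def)
  have eq: "mat n n (\<lambda>(j,k). poly (p k) (x j)) = vmat n x * C"
  proof (rule eq_matI)
    fix j k assume j: "j < dim_row (vmat n x * C)" and k: "k < dim_col (vmat n x * C)"
    hence jn: "j < n" and kn: "k < n" by (auto simp: vmat_def C_def)
    have "(vmat n x * C) $$ (j,k) = (\<Sum>i<n. x j ^ i * coeff (p k) i)"
      using jn kn by (simp add: vmat_def C_def scalar_prod_def atLeast0LessThan)
    also have "\<dots> = (\<Sum>i\<le>degree (p k). coeff (p k) i * x j ^ i)"
    proof (rule sum.mono_neutral_cong_right)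
      show "{..degree (p k)} \<subseteq> {..<n}" using deg[OF kn] kn by auto
      show "\<forall>i\<in>{..<n} - {..degree (p k)}. x j ^ i * coeff (p k) i = 0"
        by (auto simp: coeff_eq_0)
    qed (auto simp: mult.commute)
    also have "\<dots> = poly (p k) (x j)" by (simp add: poly_altdef)
    finally show "mat n n (\<lambda>(j,k). poly (p k) (x j)) $$ (j,k) = (vmat n x * C) $$ (j,k)"
      using jn kn by simp
  qed (auto simp: vmat_def C_def)
  have detC: "det C = (\<Prod>k<n. coeff (p k) k)"
  proof -
    have "upper_triangular C"
      unfolding upper_triangular_def C_def
    proof (intro allI impI)
      fix i k assume "i < dim_row (mat n n (\<lambda>(i,k). coeff (p k) i))" "k < i"
      then show "mat n n (\<lambda>(i,k). coeff (p k) i) $$ (i,k) = 0"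
        using deg[of k] by (auto intro: coeff_eq_0)
    qed
    then have "det C = prod_list (diag_mat C)" using det_upper_triangular Cc by blast
    also have "\<dots> = (\<Prod>k<n. coeff (p k) k)"
      unfolding prod_list_diag_prod by (simp add: C_def atLeast0LessThan)
    finally show ?thesis .
  qed
  show ?thesis unfolding eq det_mult[OF Vc Cc] detC by simp
qed



definition ip :: "nat \<Rightarrow> (nat \<Rightarrow> real) \<Rightarrow> (nat \<Rightarrow> real) \<Rightarrow> real" where
  "ip n u v = (\<Sum>j<n. u j * v j)"

lemma ip_comm: "ip n u v = ip n v u"
  unfolding ip_def by (simp add: mult.commute)

lemma ip_self_nonneg: "0 \<le> ip n u u"
  unfolding ip_def by (auto intro: sum_nonneg)

lemma ip_self_zero: assumes "ip n u u = 0" "j < n" shows "u j = 0"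
proof -
  have "\<forall>i\<in>{..<n}. u i * u i = 0"
    using assms(1) unfolding ip_def by (subst sum_nonneg_eq_0_iff[symmetric]) auto
  then show ?thesis using assms(2) by auto
qed

lemma ip_zero_right: assumes "\<And>j. j < n \<Longrightarrow> v j = 0" shows "ip n u v = 0"
  unfolding ip_def using assms by simp

lemma ip_sum_left:
  "ip n (\<lambda>j. \<Sum>l\<in>S. c l * v l j) u = (\<Sum>l\<in>S. c l * ip n (v l) u)"
  unfolding ip_def by (simp add: sum_distrib_left sum_distrib_right sum.swap[of _ S] mult.assoc)

lemma ip_diff_left: "ip n (\<lambda>j. u j - w j) v = ip n u v - ip n w v"
  unfolding ip_def by (simp add: left_diff_distrib sum_subtractf)

lemma sum_if_less:
  assumes "k \<le> (n::nat)" shows "(\<Sum>s<n. if s < k then g s else 0) = (\<Sum>s<k. (g s :: real))"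
  using assms by (intro sum.mono_neutral_cong_right) auto

definition gs_step :: "nat \<Rightarrow> (nat \<Rightarrow> nat \<Rightarrow> real) \<Rightarrow> nat \<Rightarrow> (nat \<Rightarrow> nat \<Rightarrow> real)" where
  "gs_step n Q i = Q(i := (\<lambda>j. Q i j - (\<Sum>l<i. ip n (Q i) (Q l) / ip n (Q l) (Q l) * Q l j)))"

fun gs :: "nat \<Rightarrow> (nat \<Rightarrow> nat \<Rightarrow> real) \<Rightarrow> nat \<Rightarrow> (nat \<Rightarrow> nat \<Rightarrow> real)" where
  "gs n a 0 = a"
| "gs n a (Suc i) = gs_step n (gs n a i) i"

definition mf :: "nat \<Rightarrow> (nat \<Rightarrow> nat \<Rightarrow> real) \<Rightarrow> real mat" where
  "mf n a = mat n n (\<lambda>(i,j). a i j)"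

lemma gs_step_det:
  assumes k: "k < n"
  shows "det (mf n (gs_step n Q k)) = det (mf n Q)"
proof -
  define c where "c l = ip n (Q k) (Q l) / ip n (Q l) (Q l)" for l
  define E :: "real mat" where
    "E = mat n n (\<lambda>(r,s). if r = k then (if s = k then 1 else if s < k then - c s else 0)
                          else (if r = s then 1 else 0))"
  have Ec: "E \<in> carrier_mat n n" by (simp add: E_def)
  have Qc: "mf n Q \<in> carrier_mat n n" by (simp add: mf_def)
  have detE: "det E = 1"
  proof -
    have "det E = prod_list (diag_mat E)"
      by (rule det_lower_triangular[OF _ Ec]) (auto simp: E_def)
    also have "\<dots> = 1" unfolding prod_list_diag_prod by (auto simp: E_def intro!: prod.neutral)
    finally show ?thesis .
  qed
  have eq: "mf n (gs_step n Q k) = E * mf n Q"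
  proof (rule eq_matI)
    fix r j assume r: "r < dim_row (E * mf n Q)" and j: "j < dim_col (E * mf n Q)"
    hence rn: "r < n" and jn: "j < n" by (auto simp: E_def mf_def)
    have "(E * mf n Q) $$ (r,j) = (\<Sum>s<n. E $$ (r,s) * Q s j)"
      using rn jn by (simp add: E_def mf_def scalar_prod_def atLeast0LessThan)
    also have "\<dots> = gs_step n Q k r j"
    proof (cases "r = k")
      case True
      have "(\<Sum>s<n. E $$ (r,s) * Q s j) =
            (\<Sum>s<n. (if s = k then Q k j else 0) + (if s < k then - (c s * Q s j) else 0))"
        by (rule sum.cong) (use k in \<open>auto simp: E_def True\<close>)
      also have "\<dots> = (\<Sum>s<n. (if s = k then Q k j else 0)) + (\<Sum>s<n. (if s < k then - (c s * Q s j) else 0))"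
        by (rule sum.distrib)
      also have "(\<Sum>s<n. (if s = k then Q k j else 0)) = Q k j" using k by simp
      also have "(\<Sum>s<n. (if s < k then - (c s * Q s j) else 0)) = (\<Sum>s<k. - (c s * Q s j))"
        using k by (intro sum_if_less) simp
      also have "Q k j + (\<Sum>s<k. - (c s * Q s j)) = gs_step n Q k r j"
        by (simp add: gs_step_def True c_def sum_negf)
      finally show ?thesis .
    next
      case False
      have "(\<Sum>s<n. E $$ (r,s) * Q s j) = (\<Sum>s<n. if s = r then Q r j else 0)"
        by (rule sum.cong) (use rn in \<open>auto simp: E_def False\<close>)
      also have "\<dots> = Q r j" using rn by simp
      finally show ?thesis by (simp add: gs_step_def False)
    qed
    finally show "mf n (gs_step n Q k) $$ (r,j) = (E * mf n Q) $$ (r,j)"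
      using rn jn by (simp add: mf_def)
  qed (auto simp: E_def mf_def)
  show ?thesis unfolding eq det_mult[OF Ec Qc] detE by simp
qed

lemma gs_inv:
  assumes "k \<le> n"
  shows "(\<forall>i. k \<le> i \<longrightarrow> gs n a k i = a i) \<and>
         (\<forall>i l. l < i \<longrightarrow> i < k \<longrightarrow> ip n (gs n a k i) (gs n a k l) = 0) \<and>
         (\<forall>i. ip n (gs n a k i) (gs n a k i) \<le> ip n (a i) (a i)) \<and>
         det (mf n (gs n a k)) = det (mf n a)"
  using assms
proof (induction k)
  case 0 then show ?case by simp
next
  case (Suc k)
  define Q where "Q = gs n a k"
  have kn: "k < n" using Suc.prems by simp
  have I1: "\<And>i. k \<le> i \<Longrightarrow> Q i = a i"
   and I2: "\<And>i l. l < i \<Longrightarrow> i < k \<Longrightarrow> ip n (Q i) (Q l) = 0"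
   and I3: "\<And>i. ip n (Q i) (Q i) \<le> ip n (a i) (a i)"
   and I4: "det (mf n Q) = det (mf n a)"
    using Suc.IH kn unfolding Q_def by auto
  have I2': "ip n (Q s) (Q l) = 0" if "s < k" "l < k" "s \<noteq> l" for s l
    using I2[of l s] I2[of s l] that by (cases "s < l") (auto simp: ip_comm)
  define c where "c l = ip n (Q k) (Q l) / ip n (Q l) (Q l)" for l
  define P where "P = (\<lambda>j. \<Sum>l<k. c l * Q l j)"
  define q where "q = (\<lambda>j. Q k j - P j)"
  have Q': "gs n a (Suc k) = Q(k := q)"
    by (simp add: Q_def[symmetric] gs_step_def q_def P_def c_def)
  have orth: "ip n q (Q l) = 0" if l: "l < k" for l
  proof -
    have "ip n q (Q l) = ip n (Q k) (Q l) - (\<Sum>s<k. c s * ip n (Q s) (Q l))"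
      unfolding q_def P_def ip_diff_left ip_sum_left ..
    also have "(\<Sum>s<k. c s * ip n (Q s) (Q l)) = (\<Sum>s<k. if s = l then c l * ip n (Q l) (Q l) else 0)"
      by (rule sum.cong) (auto simp: I2' l)
    also have "\<dots> = c l * ip n (Q l) (Q l)" using l by simp
    also have "ip n (Q k) (Q l) - c l * ip n (Q l) (Q l) = 0"
    proof (cases "ip n (Q l) (Q l) = 0")
      case True
      have "Q l j = 0" if "j < n" for j using ip_self_zero[OF True that] .
      then have "ip n (Q k) (Q l) = 0" by (rule ip_zero_right)
      then show ?thesis using True by simp
    next
      case False then show ?thesis by (simp add: c_def)
    qed
    finally show ?thesis .
  qed
  have orthP: "ip n q P = 0"
  proof -
    have "ip n q P = ip n P q" by (rule ip_comm)
    also have "\<dots> = (\<Sum>l<k. c l * ip n (Q l) q)" unfolding P_def ip_sum_left ..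
    also have "\<dots> = 0" using orth by (simp add: ip_comm)
    finally show ?thesis .
  qed
  have norm: "ip n q q \<le> ip n (Q k) (Q k)"
  proof -
    have "ip n (Q k) (Q k) = ip n (\<lambda>j. q j + P j) (\<lambda>j. q j + P j)"
      unfolding q_def by simp
    also have "\<dots> = ip n q q + 2 * ip n q P + ip n P P"
      unfolding ip_def by (simp add: algebra_simps sum.distrib sum_distrib_left)
    finally show ?thesis using orthP ip_self_nonneg[of n P] by simp
  qed
  show ?case
  proof (intro conjI allI impI)
    fix i assume "Suc k \<le> i" then show "gs n a (Suc k) i = a i" unfolding Q' using I1 by simp
  next
    fix i l assume li: "l < i" "i < Suc k"
    show "ip n (gs n a (Suc k) i) (gs n a (Suc k) l) = 0"
    proof (cases "i = k")
      case True
      then show ?thesis unfolding Q' using li orth by simp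
    next
      case False
      then show ?thesis unfolding Q' using li I2 by simp
    qed
  next
    fix i show "ip n (gs n a (Suc k) i) (gs n a (Suc k) i) \<le> ip n (a i) (a i)"
      unfolding Q' using I3 norm I1[of k] by (cases "i = k") auto
  next
    show "det (mf n (gs n a (Suc k))) = det (mf n a)"
      using gs_step_det[OF kn, of Q] I4 by (simp add: Q_def)
  qed
qed

lemma hadamard:
  "det (mf n a) ^ 2 \<le> (\<Prod>i<n. ip n (a i) (a i))"
proof -
  define Q where "Q = gs n a n"
  have I2: "\<And>i l. l < i \<Longrightarrow> i < n \<Longrightarrow> ip n (Q i) (Q l) = 0"
   and I3: "\<And>i. ip n (Q i) (Q i) \<le> ip n (a i) (a i)"
   and I4: "det (mf n Q) = det (mf n a)"
    using gs_inv[of n n a] unfolding Q_def by auto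
  define M where "M = mf n Q"
  have Mc: "M \<in> carrier_mat n n" by (simp add: M_def mf_def)
  have MTc: "transpose_mat M \<in> carrier_mat n n" using Mc by simp
  have D: "M * transpose_mat M = mat n n (\<lambda>(i,l). ip n (Q i) (Q l))"
    by (rule eq_matI) (auto simp: M_def mf_def ip_def scalar_prod_def atLeast0LessThan)
  have "upper_triangular (M * transpose_mat M)"
    unfolding D upper_triangular_def using I2 by auto
  moreover have MMc: "M * transpose_mat M \<in> carrier_mat n n" using Mc MTc by (rule mult_carrier_mat)
  ultimately have "det (M * transpose_mat M) = prod_list (diag_mat (M * transpose_mat M))"
    by (rule det_upper_triangular)
  also have "\<dots> = (\<Prod>i<n. ip n (Q i) (Q i))"
    unfolding prod_list_diag_prod D by (simp add: atLeast0LessThan)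
  finally have "det M ^ 2 = (\<Prod>i<n. ip n (Q i) (Q i))"
    unfolding det_mult[OF Mc MTc] det_transpose[OF Mc] by (simp add: power2_eq_square)
  also have "\<dots> \<le> (\<Prod>i<n. ip n (a i) (a i))"
    by (rule prod_mono) (use I3 ip_self_nonneg in auto)
  finally show ?thesis using I4 by (simp add: M_def)
qed



fun cheb :: "real poly \<Rightarrow> nat \<Rightarrow> real poly" where
  "cheb q 0 = 1"
| "cheb q (Suc 0) = q"
| "cheb q (Suc (Suc k)) = [:0,2:] * cheb q (Suc k) - cheb q k"

lemma cheb_deg_lead:
  assumes "degree q \<le> 1"
  shows "degree (cheb q k) \<le> k \<and> degree (cheb q (Suc k)) \<le> Suc k \<and>
         coeff (cheb q (Suc k)) (Suc k) = 2^k * coeff q 1"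
proof (induction k)
  case 0 then show ?case using assms by simp
next
  case (Suc k)
  have d1: "degree (cheb q (Suc k)) \<le> Suc k" and d0: "degree (cheb q k) \<le> k"
    and c: "coeff (cheb q (Suc k)) (Suc k) = 2^k * coeff q 1" using Suc.IH by auto
  have m: "[:0,2:] * p = pCons 0 (Polynomial.smult 2 p)" for p :: "real poly"
    by simp
  have dm: "degree ([:0,2:] * cheb q (Suc k)) \<le> Suc (Suc k)"
    unfolding m using d1 degree_pCons_le[of 0 "Polynomial.smult 2 (cheb q (Suc k))"] by simp
  have "degree (cheb q (Suc (Suc k))) \<le> Suc (Suc k)"
    using degree_diff_le[OF dm] d0 by simp
  moreover have "coeff (cheb q (Suc (Suc k))) (Suc (Suc k)) = 2^Suc k * coeff q 1"
  proof -
    have "coeff (cheb q k) (Suc (Suc k)) = 0" using d0 by (intro coeff_eq_0) simp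
    then show ?thesis unfolding cheb.simps m using c by simp
  qed
  ultimately show ?case using d1 by simp
qed

lemma cheb_deg: "degree q \<le> 1 \<Longrightarrow> degree (cheb q k) \<le> k"
  using cheb_deg_lead by blast

lemma cheb_lead: "degree q \<le> 1 \<Longrightarrow> coeff (cheb q (Suc k)) (Suc k) = 2^k * coeff q 1"
  using cheb_deg_lead by blast

lemma cheb_trig:
  fixes f :: "nat \<Rightarrow> real \<Rightarrow> real"
  assumes f0: "f 0 t = w" and f1: "f 1 t = w * poly q (cos t)"
    and fs: "\<And>k. f (Suc (Suc k)) t = 2 * cos t * f (Suc k) t - f k t"
  shows "f k t = w * poly (cheb q k) (cos t)"
proof -
  have "f k t = w * poly (cheb q k) (cos t) \<and> f (Suc k) t = w * poly (cheb q (Suc k)) (cos t)"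
  proof (induction k)
    case 0 then show ?case using f0 f1 by simp
  next
    case (Suc k)
    then show ?case using fs[of k] by (simp add: algebra_simps)
  qed
  then show ?thesis by simp
qed

lemma prod_lead_sq: "(\<Prod>k<n. (2::real)^k)^2 * 2^n = 2^(n*n)"
proof (induction n)
  case 0 then show ?case by simp
next
  case (Suc n)
  have "(\<Prod>k<Suc n. (2::real)^k)^2 * 2^Suc n = ((\<Prod>k<n. (2::real)^k)^2 * 2^n) * (2^n*2^n*2)"
    by (simp add: power2_eq_square algebra_simps)
  also have "\<dots> = 2^(n*n) * 2^(n+n+1)" unfolding Suc.IH by (simp add: power_add)
  also have "\<dots> = 2^(Suc n * Suc n)" by (simp add: power_add[symmetric] algebra_simps)
  finally show ?case .
qed

lemma fam_pp: "sin (real (Suc k) * t) = sin t * poly (cheb [:0,2:] k) (cos t)"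
proof (rule cheb_trig[where f = "\<lambda>k t. sin (real (Suc k) * t)"])
  show "sin (real (Suc 1) * t) = sin t * poly [:0,2:] (cos t)" by (simp add: sin_double)
  fix k
  have a: "real (Suc (Suc (Suc k))) * t = real (Suc (Suc k)) * t + t" by (simp add: algebra_simps)
  have b: "real (Suc k) * t = real (Suc (Suc k)) * t - t" by (simp add: algebra_simps)
  show "sin (real (Suc (Suc (Suc k))) * t) = 2 * cos t * sin (real (Suc (Suc k)) * t) - sin (real (Suc k) * t)"
    unfolding a by (subst b) (simp add: sin_add sin_diff)
qed simp

lemma fam_mp: "cos ((real k + 1/2) * t) = cos (t/2) * poly (cheb [:-1,2:] k) (cos t)"
proof (rule cheb_trig[where f = "\<lambda>k t. cos ((real k + 1/2) * t)"])
  have "cos ((1 + 1/2) * t) = cos (3 * (t/2))" by (simp add: algebra_simps)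
  also have "\<dots> = cos (t/2) * (2 * cos t - 1)"
  proof -
    have "cos t = cos (2 * (t/2))" by simp
    also have "\<dots> = 2 * cos (t/2)^2 - 1" by (rule cos_double_cos)
    finally have ct: "cos t = 2 * cos (t/2)^2 - 1" .
    show ?thesis unfolding cos_treble_cos ct by (simp add: algebra_simps power2_eq_square power3_eq_cube)
  qed
  finally show "cos ((real 1 + 1/2) * t) = cos (t/2) * poly [:-1,2:] (cos t)" by (simp add: algebra_simps)
  fix k
  have a: "(real (Suc (Suc k)) + 1/2) * t = (real (Suc k) + 1/2) * t + t" by (simp add: algebra_simps)
  have b: "(real k + 1/2) * t = (real (Suc k) + 1/2) * t - t" by (simp add: algebra_simps)
  show "cos ((real (Suc (Suc k)) + 1/2) * t) = 2 * cos t * cos ((real (Suc k) + 1/2) * t) - cos ((real k + 1/2) * t)"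
    unfolding a by (subst b) (simp add: cos_add cos_diff)
qed simp

lemma fam_pm: "sin ((real k + 1/2) * t) = sin (t/2) * poly (cheb [:1,2:] k) (cos t)"
proof (rule cheb_trig[where f = "\<lambda>k t. sin ((real k + 1/2) * t)"])
  have "sin ((1 + 1/2) * t) = sin (3 * (t/2))" by (simp add: algebra_simps)
  also have "\<dots> = sin (t/2) * (2 * cos t + 1)"
  proof -
    have "cos t = cos (2 * (t/2))" by simp
    also have "\<dots> = 2 * cos (t/2)^2 - 1" by (rule cos_double_cos)
    finally have ct: "cos t = 2 * cos (t/2)^2 - 1" .
    have "sin (3 * (t/2)) = sin (2 * (t/2) + t/2)" by (simp add: algebra_simps)
    also have "\<dots> = sin (2*(t/2)) * cos (t/2) + cos (2*(t/2)) * sin (t/2)" by (rule sin_add)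
    also have "\<dots> = 2 * sin (t/2) * cos (t/2) * cos (t/2) + cos t * sin (t/2)"
      by (simp only: sin_double) simp
    also have "\<dots> = sin (t/2) * (2 * cos t + 1)" unfolding ct by (simp add: algebra_simps power2_eq_square)
    finally show ?thesis .
  qed
  finally show "sin ((real 1 + 1/2) * t) = sin (t/2) * poly [:1,2:] (cos t)" by (simp add: algebra_simps)
  fix k
  have a: "(real (Suc (Suc k)) + 1/2) * t = (real (Suc k) + 1/2) * t + t" by (simp add: algebra_simps)
  have b: "(real k + 1/2) * t = (real (Suc k) + 1/2) * t - t" by (simp add: algebra_simps)
  show "sin ((real (Suc (Suc k)) + 1/2) * t) = 2 * cos t * sin ((real (Suc k) + 1/2) * t) - sin ((real k + 1/2) * t)"
    unfolding a by (subst b) (simp add: sin_add sin_diff)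
qed simp

lemma fam_mm: "cos (real k * t) = 1 * poly (cheb [:0,1:] k) (cos t)"
proof (rule cheb_trig[where f = "\<lambda>k t. cos (real k * t)"])
  fix k
  have a: "real (Suc (Suc k)) * t = real (Suc k) * t + t" by (simp add: algebra_simps)
  have b: "real k * t = real (Suc k) * t - t" by (simp add: algebra_simps)
  show "cos (real (Suc (Suc k)) * t) = 2 * cos t * cos (real (Suc k) * t) - cos (real k * t)"
    unfolding a by (subst b) (simp add: cos_add cos_diff)
qed simp_all


lemma vdm_sq_eq: "vdm_sq n th = (\<Prod>k<n. \<Prod>j<k. (cos (th k) - cos (th j)))^2"
  unfolding vdm_sq_def prod_power_distrib by (simp add: power2_commute)

lemma key:
  fixes w :: "real \<Rightarrow> real" and f :: "nat \<Rightarrow> real \<Rightarrow> real" and q :: "real poly"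
  assumes dq: "degree q \<le> 1"
    and fam: "\<And>k t. f k t = w t * poly (cheb q k) (cos t)"
    and bnd: "\<And>k t. \<bar>f k t\<bar> \<le> 1"
  shows "(\<Prod>j<n. w (th j)^2) * vdm_sq n th * (\<Prod>k<n. coeff (cheb q k) k)^2 \<le> real n ^ n"
proof -
  define a where "a = (\<lambda>j k. f k (th j))"
  define x where "x = (\<lambda>j. cos (th j))"
  have "mf n a = mat n n (\<lambda>(j,k). w (th j) * poly (cheb q k) (x j))"
    unfolding mf_def a_def x_def by (simp add: fam)
  hence "det (mf n a) = (\<Prod>j<n. w (th j)) * det (mat n n (\<lambda>(j,k). poly (cheb q k) (x j)))"
    by (simp add: det_rows_scale)
  also have "det (mat n n (\<lambda>(j,k). poly (cheb q k) (x j))) = (\<Prod>k<n. coeff (cheb q k) k) * det (vmat n x)"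
    by (rule det_poly_basis) (use cheb_deg[OF dq] in auto)
  also have "det (vmat n x) = (\<Prod>k<n. \<Prod>j<k. (x k - x j))" by (rule vander)
  finally have d: "det (mf n a) = (\<Prod>j<n. w (th j)) * ((\<Prod>k<n. coeff (cheb q k) k) * (\<Prod>k<n. \<Prod>j<k. (x k - x j)))" .
  have E: "det (mf n a) ^ 2 = (\<Prod>j<n. w (th j)^2) * vdm_sq n th * (\<Prod>k<n. coeff (cheb q k) k)^2"
    unfolding d vdm_sq_eq x_def by (simp add: power_mult_distrib prod_power_distrib)
  have "(\<Prod>j<n. w (th j)^2) * vdm_sq n th * (\<Prod>k<n. coeff (cheb q k) k)^2 \<le> (\<Prod>i<n. ip n (a i) (a i))"
    using hadamard[of n a] unfolding E .
  also have "\<dots> \<le> (\<Prod>i<n. real n)"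
  proof (rule prod_mono)
    fix i assume "i \<in> {..<n}"
    have "ip n (a i) (a i) \<le> (\<Sum>j<n. 1)"
      unfolding ip_def
    proof (rule sum_mono)
      fix j show "a i j * a i j \<le> 1"
        using bnd[of j "th i"] unfolding a_def
        by (metis abs_square_le_1 power2_eq_square)
    qed
    then show "0 \<le> ip n (a i) (a i) \<and> ip n (a i) (a i) \<le> real n"
      using ip_self_nonneg by simp
  qed
  also have "\<dots> = real n ^ n" by simp
  finally show ?thesis .
qed

lemma lead_pow: "coeff q 1 = 2 \<Longrightarrow> degree q \<le> 1 \<Longrightarrow> coeff (cheb q k) k = 2^k"
  by (cases k) (simp_all add: cheb_lead)

lemma branch_gen:
  fixes X L2 N c P D :: real
  assumes "X * L2 \<le> N" "L2 * c = P" "c \<ge> 0" "D > 0"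
  shows "P / D * X \<le> c * N / D"
proof -
  have "P / D * X = c * (X * L2) / D" using assms(2) by (simp add: algebra_simps)
  also have "\<dots> \<le> c * N / D" using assms by (intro divide_right_mono mult_left_mono) auto
  finally show ?thesis .
qed

lemma bound_2:
  fixes q :: "real poly" and w :: "real \<Rightarrow> real" and f :: "nat \<Rightarrow> real \<Rightarrow> real"
  assumes dq: "degree q \<le> 1" and cq: "coeff q 1 = 2"
    and fam: "\<And>k t. f k t = w t * poly (cheb q k) (cos t)"
    and bnd: "\<And>k t. \<bar>f k t\<bar> \<le> 1"
  shows "2 ^ (n^2) / (fact n * pi ^ n) * (\<Prod>j<n. (w (th j))^2) * vdm_sq n th
          \<le> 2^n * real n ^ n / (fact n * pi ^ n)"
proof -
  have k: "(\<Prod>j<n. w (th j)^2) * vdm_sq n th * (\<Prod>k<n. (2::real)^k)^2 \<le> real n ^ n"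
    using key[OF dq fam bnd, where n=n and th=th] lead_pow[OF cq dq] by simp
  have "2 ^ (n^2) / (fact n * pi ^ n) * ((\<Prod>j<n. (w (th j))^2) * vdm_sq n th)
          \<le> 2^n * real n ^ n / (fact n * pi ^ n)"
  proof (rule branch_gen[OF k])
    show "(\<Prod>k<n. (2::real)^k)^2 * 2^n = 2^(n^2)" using prod_lead_sq[of n] by (simp add: power2_eq_square)
  qed auto
  then show ?thesis by (simp add: mult.assoc)
qed

lemma bound_mm:
  assumes "n \<ge> 1"
  shows "2 ^ ((n-1)^2) / (fact n * pi ^ n) * vdm_sq n th \<le> 2^n * real n ^ n / (fact n * pi ^ n)"
proof -
  obtain m where m: "n = Suc m" using assms by (cases n) auto
  have dq: "degree [:0,1::real:] \<le> 1" by simp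
  have fam: "\<And>k t. cos (real k * t) = (\<lambda>t. 1) t * poly (cheb [:0,1:] k) (cos t)"
    using fam_mm by simp
  have k0: "(\<Prod>j<n. ((\<lambda>t. 1::real) (th j))^2) * vdm_sq n th * (\<Prod>k<n. coeff (cheb [:0,1:] k) k)^2 \<le> real n ^ n"
    by (rule key[OF dq fam]) simp
  have "(\<Prod>k<n. coeff (cheb [:0,1::real:] k) k) = (\<Prod>k<m. (2::real)^k)"
    unfolding m prod.lessThan_Suc_shift by (simp add: cheb_lead)
  hence k: "vdm_sq n th * (\<Prod>k<m. (2::real)^k)^2 \<le> real n ^ n" using k0 by simp
  have "2 ^ ((n-1)^2) / (fact n * pi ^ n) * vdm_sq n th \<le> 2^m * real n ^ n / (fact n * pi ^ n)"
  proof (rule branch_gen[OF k])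
    show "(\<Prod>k<m. (2::real)^k)^2 * 2^m = 2^((n-1)^2)" using prod_lead_sq[of m] by (simp add: power2_eq_square m)
  qed auto
  also have "\<dots> \<le> 2^n * real n ^ n / (fact n * pi ^ n)"
    unfolding m by (intro divide_right_mono mult_right_mono) auto
  finally show ?thesis .
qed

lemma rho_le:
  assumes "n \<ge> 1"
  shows "rho n a b th \<le> 2^n * real n ^ n / (fact n * pi ^ n)"
proof -
  have pp: "2 ^ (n^2) / (fact n * pi ^ n) * (\<Prod>j<n. (sin (th j))^2) * vdm_sq n th
          \<le> 2^n * real n ^ n / (fact n * pi ^ n)"
    by (rule bound_2[where q = "[:0,2:]" and f = "\<lambda>k t. sin (real (Suc k) * t)", OF _ _ fam_pp]) (auto simp: abs_sin_le_one)
  have mp: "2 ^ (n^2) / (fact n * pi ^ n) * (\<Prod>j<n. (cos (th j / 2))^2) * vdm_sq n th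
          \<le> 2^n * real n ^ n / (fact n * pi ^ n)"
    by (rule bound_2[where q = "[:-1,2:]" and f = "\<lambda>k t. cos ((real k + 1/2) * t)" and w = "\<lambda>t. cos (t/2)", OF _ _ fam_mp]) (auto simp: abs_cos_le_one)
  have pm: "2 ^ (n^2) / (fact n * pi ^ n) * (\<Prod>j<n. (sin (th j / 2))^2) * vdm_sq n th
          \<le> 2^n * real n ^ n / (fact n * pi ^ n)"
    by (rule bound_2[where q = "[:1,2:]" and f = "\<lambda>k t. sin ((real k + 1/2) * t)" and w = "\<lambda>t. sin (t/2)", OF _ _ fam_pm]) (auto simp: abs_sin_le_one)
  have mm: "2 ^ ((n-1)^2) / (fact n * pi ^ n) * vdm_sq n th \<le> 2^n * real n ^ n / (fact n * pi ^ n)"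
    by (rule bound_mm[OF assms])
  show ?thesis unfolding rho_def using pp mp pm mm by auto
qed

lemma final_bound:
  assumes "n \<ge> 1"
  shows "2^n * real n ^ n / (fact n * pi ^ n) \<le> (2 * exp 1 / pi) ^ n / sqrt (2 * pi * n)"
proof -
  define S where "S = sqrt (2 * pi * real n)"
  have S: "S > 0" unfolding S_def using assms by simp
  have st: "S * real n ^ n \<le> fact n * exp 1 ^ n" unfolding S_def by (rule stirling_lower[OF assms])
  have f: "(fact n :: real) > 0" by simp
  have "real n ^ n / fact n = (S * real n ^ n) / (S * fact n)" using S by simp
  also have "\<dots> \<le> (fact n * exp 1 ^ n) / (S * fact n)"
    using st S f by (intro divide_right_mono) auto
  also have "\<dots> = exp 1 ^ n / S" using f by simp
  finally have A: "real n ^ n / fact n \<le> exp 1 ^ n / S" .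
  have "2^n * real n ^ n / (fact n * pi ^ n) = (2^n / pi^n) * (real n ^ n / fact n)" by simp
  also have "\<dots> \<le> (2^n / pi^n) * (exp 1 ^ n / S)" using A by (intro mult_left_mono) auto
  also have "\<dots> = (2 * exp 1 / pi) ^ n / sqrt (2 * pi * n)"
    unfolding S_def by (simp add: power_divide power_mult_distrib)
  finally show ?thesis .
qed

lemma t2: "(\<lambda>_. 0::real) \<in> {th. \<forall>j<n. th j \<in> {0..pi}} \<inter> {th. \<forall>j\<ge>n. th j = (0::real)}"
  using pi_ge_zero by simp
lemma ne: "{th. \<forall>j<n. th j \<in> {0..pi}} \<inter> {th. \<forall>j\<ge>n. th j = (0::real)} \<noteq> {}"
proof
  assume "{th. \<forall>j<n. th j \<in> {0..pi}} \<inter> {th. \<forall>j\<ge>n. th j = (0::real)} = {}"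
  with t2[of n] show False by (simp only: empty_iff)
qed
theorem lemma4p1:
  fixes n :: nat and a b :: real
  assumes "n \<ge> 1"
    and "a \<in> {-1/2, 1/2}" and "b \<in> {-1/2, 1/2}"
  shows "(SUP th\<in>{th. \<forall>j<n. th j \<in> {0..pi}} \<inter> {th. \<forall>j\<ge>n. th j = 0}. rho n a b th)
           \<le> (2 * exp 1 / pi) ^ n / sqrt (2 * pi * n)"
  apply (rule cSUP_least[OF ne]) 
  by (rule order_trans[OF rho_le[OF assms(1)] final_bound[OF assms(1)]])

end
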